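(* Every disconnected graph $H$ is the $\operatorname{IR}$-graph of infinitely many graphs; that is, there are infinitely many (pairwise non-isomorphic) graphs $G$ with $G(\operatorname{IR})\cong H$.
   Context: All graphs are finite and simple. For a graph $G=(V,E)$, $D\subseteq V$ and $v\in D$, $\operatorname{PN}(v,D)=N[v]-N[D-\{v\}]$ (closed neighbourhoods). $D$ is irredundant if $\operatorname{PN}(v,D)\neq\varnothing$ for all $v\in D$; $\operatorname{IR}(G)$ is the maximum cardinality of an irredundant set and an $\operatorname{IR}(G)$-set is an irredundant set of cardinality $\operatorname{IR}(G)$. The $\operatorname{IR}$-graph $G(\operatorname{IR})$ has the $\operatorname{IR}(G)$-sets as vertices, with $D\sim D'$ iff there exist $u\in D$, $v\in D'$, $uv\in E(G)$, with $D'=(D-\{u\})\cup\{v\}$. *)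

theory Defs
  imports Main
begin

type_synonym 'a graph = "'a set \<times> 'a set set"

definition verts :: "'a graph \<Rightarrow> 'a set" where "verts G = fst G"
definition edges :: "'a graph \<Rightarrow> 'a set set" where "edges G = snd G"

definition adj :: "'a graph \<Rightarrow> 'a \<Rightarrow> 'a \<Rightarrow> bool" where
  "adj G u v \<longleftrightarrow> {u, v} \<in> edges G"

definition is_graph :: "'a graph \<Rightarrow> bool" where
  "is_graph G \<longleftrightarrow> finite (verts G) \<and>
     (\<forall>e\<in>edges G. \<exists>u v. e = {u, v} \<and> u \<noteq> v \<and> u \<in> verts G \<and> v \<in> verts G)"

definition graph_iso :: "'a graph \<Rightarrow> 'b graph \<Rightarrow> bool" where
  "graph_iso G H \<longleftrightarrow> (\<exists>f. bij_betw f (verts G) (verts H) \<and>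
     (\<forall>u\<in>verts G. \<forall>v\<in>verts G. adj G u v \<longleftrightarrow> adj H (f u) (f v)))"

definition reachable :: "'a graph \<Rightarrow> 'a \<Rightarrow> 'a \<Rightarrow> bool" where
  "reachable G = (\<lambda>u v. u \<in> verts G \<and> v \<in> verts G \<and> adj G u v)\<^sup>*\<^sup>*"

definition connected_graph :: "'a graph \<Rightarrow> bool" where
  "connected_graph G \<longleftrightarrow> verts G \<noteq> {} \<and>
     (\<forall>u\<in>verts G. \<forall>v\<in>verts G. reachable G u v)"

definition disconnected_graph :: "'a graph \<Rightarrow> bool" where
  "disconnected_graph G \<longleftrightarrow> verts G \<noteq> {} \<and> \<not> connected_graph G"

definition cnbhd :: "'a graph \<Rightarrow> 'a \<Rightarrow> 'a set" where
  "cnbhd G v = insert v {u \<in> verts G. adj G u v}"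

definition cnbhd_set :: "'a graph \<Rightarrow> 'a set \<Rightarrow> 'a set" where
  "cnbhd_set G S = (\<Union>v\<in>S. cnbhd G v)"

definition PN :: "'a graph \<Rightarrow> 'a \<Rightarrow> 'a set \<Rightarrow> 'a set" where
  "PN G v D = cnbhd G v - cnbhd_set G (D - {v})"

definition irredundant :: "'a graph \<Rightarrow> 'a set \<Rightarrow> bool" where
  "irredundant G D \<longleftrightarrow> D \<subseteq> verts G \<and> (\<forall>v\<in>D. PN G v D \<noteq> {})"

definition IR :: "'a graph \<Rightarrow> nat" where
  "IR G = Max (card ` {D. irredundant G D})"

definition IR_sets :: "'a graph \<Rightarrow> 'a set set" where
  "IR_sets G = {D. irredundant G D \<and> card D = IR G}"

definition IR_graph :: "'a graph \<Rightarrow> 'a set graph" where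
  "IR_graph G = (IR_sets G,
     {{D, D'} | D D'. D \<in> IR_sets G \<and> D' \<in> IR_sets G \<and>
        (\<exists>u\<in>D. \<exists>v\<in>D'. adj G u v \<and> D' = (D - {u}) \<union> {v})})"

end

theory Submission
  imports Defs
begin

lemma adj_sym: "adj G x y = adj G y x" by (simp add: adj_def insert_commute)

lemma adj_irrefl: "is_graph G \<Longrightarrow> \<not> adj G x x"
  unfolding is_graph_def adj_def by (metis insert_absorb2 doubleton_eq_iff)

lemma adj_verts: "is_graph G \<Longrightarrow> adj G x y \<Longrightarrow> x \<in> verts G \<and> y \<in> verts G"
  unfolding is_graph_def adj_def by (auto simp: doubleton_eq_iff)

lemma PN_ne: "PN G v D \<noteq> {} \<longleftrightarrow> (\<exists>z. z \<in> cnbhd G v \<and> (\<forall>w\<in>D-{v}. z \<notin> cnbhd G w))"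
  by (auto simp: PN_def cnbhd_set_def)

locale gadget =
  fixes G :: "'a graph" and A B T S :: "'a set"
  assumes g: "is_graph G"
    and V: "verts G = A \<union> B \<union> T \<union> S"
    and dAB: "A \<inter> B = {}" and dAT: "A \<inter> T = {}" and dAS: "A \<inter> S = {}"
    and dBT: "B \<inter> T = {}" and dBS: "B \<inter> S = {}" and dTS: "T \<inter> S = {}"
    and AB: "\<And>a b. a \<in> A \<Longrightarrow> b \<in> B \<Longrightarrow> adj G a b"
    and AT: "\<And>a t. a \<in> A \<Longrightarrow> t \<in> T \<Longrightarrow> adj G a t"
    and AS: "\<And>a s. a \<in> A \<Longrightarrow> s \<in> S \<Longrightarrow> \<not> adj G a s"
    and BS: "\<And>b s. b \<in> B \<Longrightarrow> s \<in> S \<Longrightarrow> adj G b s"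
    and BT: "\<And>b t. b \<in> B \<Longrightarrow> t \<in> T \<Longrightarrow> \<not> adj G b t"
    and TT: "\<And>t t'. t \<in> T \<Longrightarrow> t' \<in> T \<Longrightarrow> t \<noteq> t' \<Longrightarrow> adj G t t'"
    and SS: "\<And>s s'. s \<in> S \<Longrightarrow> s' \<in> S \<Longrightarrow> s \<noteq> s' \<Longrightarrow> adj G s s'"
    and TS: "\<And>t. t \<in> T \<Longrightarrow> \<exists>s\<in>S. adj G t s \<and> (\<forall>t'\<in>T. t' \<noteq> t \<longrightarrow> \<not> adj G t' s)"
    and ST: "\<And>s. s \<in> S \<Longrightarrow> \<exists>t\<in>T. adj G s t \<and> (\<forall>s'\<in>S. s' \<noteq> s \<longrightarrow> \<not> adj G s' t)"
begin

lemma swapped: "gadget G B A S T"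
proof
  show "is_graph G" by (rule g)
  show "verts G = B \<union> A \<union> S \<union> T" using V by blast
  show "B \<inter> A = {}" "B \<inter> S = {}" "B \<inter> T = {}" "A \<inter> S = {}" "A \<inter> T = {}" "S \<inter> T = {}"
    using dAB dAT dAS dBT dBS dTS by blast+
  show "\<And>a b. a \<in> B \<Longrightarrow> b \<in> A \<Longrightarrow> adj G a b" using AB adj_sym by metis
  show "\<And>a t. a \<in> B \<Longrightarrow> t \<in> S \<Longrightarrow> adj G a t" using BS by metis
  show "\<And>a s. a \<in> B \<Longrightarrow> s \<in> T \<Longrightarrow> \<not> adj G a s" using BT by metis
  show "\<And>b s. b \<in> A \<Longrightarrow> s \<in> T \<Longrightarrow> adj G b s" using AT by metis
  show "\<And>b t. b \<in> A \<Longrightarrow> t \<in> S \<Longrightarrow> \<not> adj G b t" using AS by metis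
  show "\<And>t t'. t \<in> S \<Longrightarrow> t' \<in> S \<Longrightarrow> t \<noteq> t' \<Longrightarrow> adj G t t'" using SS by metis
  show "\<And>s s'. s \<in> T \<Longrightarrow> s' \<in> T \<Longrightarrow> s \<noteq> s' \<Longrightarrow> adj G s s'" using TT by metis
  show "\<And>t. t \<in> S \<Longrightarrow> \<exists>s\<in>T. adj G t s \<and> (\<forall>t'\<in>S. t' \<noteq> t \<longrightarrow> \<not> adj G t' s)" using ST by metis
  show "\<And>s. s \<in> T \<Longrightarrow> \<exists>t\<in>S. adj G s t \<and> (\<forall>s'\<in>T. s' \<noteq> s \<longrightarrow> \<not> adj G s' t)" using TS by metis
qed

lemma cn: "z \<in> cnbhd G v \<longleftrightarrow> z = v \<or> adj G z v"
  using adj_verts[OF g] by (auto simp: cnbhd_def)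

lemma T_case:
  assumes irr: "irredundant G D" and t1: "t1 \<in> D" "t1 \<in> T" and t2: "t2 \<in> D" "t2 \<in> T" "t1 \<noteq> t2"
  shows "D \<subseteq> T \<union> A" and "\<And>a a'. a \<in> D \<Longrightarrow> a \<in> A \<Longrightarrow> a' \<in> D \<Longrightarrow> a' \<in> A \<Longrightarrow> a = a'"
proof -
  have DV: "D \<subseteq> A \<union> B \<union> T \<union> S" using irr V by (auto simp: irredundant_def)
  have PN: "\<exists>z. (z = v \<or> adj G z v) \<and> (\<forall>w\<in>D-{v}. \<not> (z = w \<or> adj G z w))" if "v \<in> D" for v
    using irr that unfolding irredundant_def PN_ne cn by blast
  have zV: "z \<in> A \<union> B \<union> T \<union> S" if "z = v \<or> adj G z v" "v \<in> D" for z v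
    using that DV adj_verts[OF g] V by blast
  show noS: "D \<subseteq> T \<union> A"
  proof
    fix x assume x: "x \<in> D"
    show "x \<in> T \<union> A"
    proof (rule ccontr)
      assume nx: "x \<notin> T \<union> A"
      with x DV have xBS: "x \<in> B \<or> x \<in> S" by blast
      obtain z where z: "z = t1 \<or> adj G z t1" and nz: "\<forall>w\<in>D-{t1}. \<not> (z = w \<or> adj G z w)"
        using PN[OF t1(1)] by blast
      have x1: "x \<in> D - {t1}" using x nx t1 by auto
      have t21: "t2 \<in> D - {t1}" using t2 by auto
      have "z \<in> A \<union> B \<union> T \<union> S" using zV[OF z t1(1)] .
      then show False
      proof (elim UnE)
        assume "z \<in> A" then show False using nz t21 AT t2 by (metis adj_sym)
      next
        assume "z \<in> B" then show False using z BT t1 dBT by (metis adj_sym disjoint_iff)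
      next
        assume "z \<in> T" then show False using nz t21 TT t2 by metis
      next
        assume zS: "z \<in> S"
        show False using xBS
        proof
          assume "x \<in> B" then show False using nz x1 BS zS by (metis adj_sym)
        next
          assume "x \<in> S" then show False using nz x1 SS zS by metis
        qed
      qed
    qed
  qed
  fix a a' assume a: "a \<in> D" "a \<in> A" and a': "a' \<in> D" "a' \<in> A"
  show "a = a'"
  proof (rule ccontr)
    assume ne: "a \<noteq> a'"
    obtain z where z: "z = a \<or> adj G z a" and nz: "\<forall>w\<in>D-{a}. \<not> (z = w \<or> adj G z w)"
      using PN[OF a(1)] by blast
    have t11: "t1 \<in> D - {a}" using t1 a dAT by auto
    have a1: "a' \<in> D - {a}" using a' ne by auto
    have "z \<in> A \<union> B \<union> T \<union> S" using zV[OF z a(1)] .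
    then show False
    proof (elim UnE)
      assume "z \<in> A" then show False using nz t11 AT t1 by (metis adj_sym)
    next
      assume "z \<in> B" then show False using nz a1 AB a' by (metis adj_sym)
    next
      assume "z \<in> T" then show False using nz t11 TT t1 by metis
    next
      assume "z \<in> S" then show False using z AS a dAS by (metis adj_sym disjoint_iff)
    qed
  qed
qed

end

context gadget
begin

lemma irr_sub: "irredundant G D \<Longrightarrow> D \<subseteq> A \<union> B \<union> T \<union> S"
  using V by (auto simp: irredundant_def)

lemma ub:
  assumes irr: "irredundant G D" and fin: "finite (verts G)"
    and cT: "card A + card B + 2 \<le> card T" and cS: "card S = card T"
  shows "card D \<le> card T + 1 \<and> (card D = card T + 1 \<longrightarrow> (\<exists>a\<in>A. D = insert a T) \<or> (\<exists>b\<in>B. D = insert b S))"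
proof -
  have DV: "D \<subseteq> A \<union> B \<union> T \<union> S" using irr_sub[OF irr] .
  have finA: "finite A" "finite B" "finite T" "finite S" using fin V by auto
  have finD: "finite D" using DV finA by (meson finite_UnI finite_subset)
  show ?thesis
  proof (cases "\<forall>x\<in>D\<inter>T. \<forall>y\<in>D\<inter>T. x = y")
    case False
    then obtain t1 t2 where t: "t1 \<in> D" "t1 \<in> T" "t2 \<in> D" "t2 \<in> T" "t1 \<noteq> t2" by blast
    have s1: "D \<subseteq> T \<union> A" by (rule T_case(1)[OF irr t])
    have s2: "\<forall>x\<in>D\<inter>A. \<forall>y\<in>D\<inter>A. x = y" using T_case(2)[OF irr t] by blast
    have cA: "card (D \<inter> A) \<le> 1" using s2 card_le_Suc0_iff_eq[of "D \<inter> A"] finD by auto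
    have cT': "card (D \<inter> T) \<le> card T" using finA by (simp add: card_mono)
    have eq: "D = (D \<inter> T) \<union> (D \<inter> A)" using s1 by blast
    have "card D \<le> card (D \<inter> T) + card (D \<inter> A)" by (subst eq) (rule card_Un_le)
    hence le: "card D \<le> card T + 1" using cA cT' by linarith
    moreover have "card D = card T + 1 \<longrightarrow> (\<exists>a\<in>A. D = insert a T)"
    proof
      assume c: "card D = card T + 1"
      have "card (D \<inter> T) = card T" using c cA cT' \<open>card D \<le> card (D \<inter> T) + card (D \<inter> A)\<close> by linarith
      hence DT: "D \<inter> T = T" using card_subset_eq[of T "D \<inter> T"] finA by blast
      have "card (D \<inter> A) = 1" using c cA cT' \<open>card D \<le> card (D \<inter> T) + card (D \<inter> A)\<close> by linarith
      then obtain a where "D \<inter> A = {a}" by (meson card_1_singletonE)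
      hence "a \<in> A" "D = insert a T" using eq DT by auto
      thus "\<exists>a\<in>A. D = insert a T" by blast
    qed
    ultimately show ?thesis by blast
  next
    case T1: True
    show ?thesis
    proof (cases "\<forall>x\<in>D\<inter>S. \<forall>y\<in>D\<inter>S. x = y")
      case False
      then obtain t1 t2 where t: "t1 \<in> D" "t1 \<in> S" "t2 \<in> D" "t2 \<in> S" "t1 \<noteq> t2" by blast
      have s1: "D \<subseteq> S \<union> B" by (rule gadget.T_case(1)[OF swapped irr t])
      have s2: "\<forall>x\<in>D\<inter>B. \<forall>y\<in>D\<inter>B. x = y" using gadget.T_case(2)[OF swapped irr t] by blast
      have cA: "card (D \<inter> B) \<le> 1" using s2 card_le_Suc0_iff_eq[of "D \<inter> B"] finD by auto
      have cT': "card (D \<inter> S) \<le> card S" using finA by (simp add: card_mono)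
      have eq: "D = (D \<inter> S) \<union> (D \<inter> B)" using s1 by blast
      have le0: "card D \<le> card (D \<inter> S) + card (D \<inter> B)" by (subst eq) (rule card_Un_le)
      hence le: "card D \<le> card T + 1" using cA cT' cS by linarith
      moreover have "card D = card T + 1 \<longrightarrow> (\<exists>b\<in>B. D = insert b S)"
      proof
        assume c: "card D = card T + 1"
        have "card (D \<inter> S) = card S" using c cA cT' le0 cS by linarith
        hence DT: "D \<inter> S = S" using card_subset_eq[of S "D \<inter> S"] finA by blast
        have "card (D \<inter> B) = 1" using c cA cT' le0 cS by linarith
        then obtain a where "D \<inter> B = {a}" by (meson card_1_singletonE)
        hence "a \<in> B" "D = insert a S" using eq DT by auto
        thus "\<exists>b\<in>B. D = insert b S" by blast
      qed
      ultimately show ?thesis by blast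
    next
      case S1: True
      have c1: "card (D \<inter> T) \<le> 1" using T1 card_le_Suc0_iff_eq[of "D \<inter> T"] finD by auto
      have c2: "card (D \<inter> S) \<le> 1" using S1 card_le_Suc0_iff_eq[of "D \<inter> S"] finD by auto
      have eq: "D \<subseteq> A \<union> B \<union> (D \<inter> T) \<union> (D \<inter> S)" using DV by blast
      have "card D \<le> card (A \<union> B \<union> (D \<inter> T) \<union> (D \<inter> S))"
        by (rule card_mono[OF _ eq]) (use finA in auto)
      also have "\<dots> \<le> card A + card B + card (D \<inter> T) + card (D \<inter> S)"
        by (meson card_Un_le add_le_mono le_refl order_trans)
      finally have "card D \<le> card A + card B + 2" using c1 c2 by linarith
      thus ?thesis using cT by linarith
    qed
  qed
qed

lemma irr_ins: "a \<in> A \<Longrightarrow> B \<noteq> {} \<Longrightarrow> irredundant G (insert a T)"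
proof -
  assume a: "a \<in> A" and Bne: "B \<noteq> {}"
  then obtain b where b: "b \<in> B" by blast
  have sub: "insert a T \<subseteq> verts G" using V a by blast
  have "PN G v (insert a T) \<noteq> {}" if v: "v \<in> insert a T" for v
  proof (cases "v = a")
    case True
    have "b \<in> cnbhd G a" using AB[OF a b] cn by (metis adj_sym)
    moreover have "\<forall>w\<in>insert a T - {a}. b \<notin> cnbhd G w"
      using BT b dBT by (auto simp: cn)
    ultimately show ?thesis using True by (auto simp: PN_ne)
  next
    case False
    hence t: "v \<in> T" using v by blast
    obtain s where s: "s \<in> S" "adj G v s" "\<forall>t'\<in>T. t' \<noteq> v \<longrightarrow> \<not> adj G t' s" using TS[OF t] by blast
    have "s \<in> cnbhd G v" using s cn adj_sym by metis
    moreover have "\<forall>w\<in>insert a T - {v}. s \<notin> cnbhd G w"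
    proof
      fix w assume w: "w \<in> insert a T - {v}"
      show "s \<notin> cnbhd G w"
      proof (cases "w = a")
        case True thus ?thesis using AS[OF a s(1)] s(1) a dAS by (auto simp: cn adj_sym)
      next
        case False
        hence "w \<in> T" "w \<noteq> v" using w by auto
        thus ?thesis using s dTS by (auto simp: cn adj_sym)
      qed
    qed
    ultimately show ?thesis by (auto simp: PN_ne)
  qed
  thus ?thesis using sub by (auto simp: irredundant_def)
qed

end

definition swp :: "'a graph \<Rightarrow> 'a set \<Rightarrow> 'a set \<Rightarrow> bool" where
  "swp G D D' \<longleftrightarrow> (\<exists>u\<in>D. \<exists>v\<in>D'. adj G u v \<and> D' = (D - {u}) \<union> {v})"

lemma IR_graph_adj:
  "adj (IR_graph G) D1 D2 \<longleftrightarrow> D1 \<in> IR_sets G \<and> D2 \<in> IR_sets G \<and> (swp G D1 D2 \<or> swp G D2 D1)"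
  unfolding adj_def IR_graph_def edges_def swp_def snd_conv
  by (auto simp: doubleton_eq_iff)

lemma IR_graph_verts: "verts (IR_graph G) = IR_sets G"
  by (simp add: IR_graph_def verts_def)

context gadget
begin

lemma IR_val:
  assumes fin: "finite (verts G)" and cT: "card A + card B + 2 \<le> card T" and cS: "card S = card T"
    and a0: "a0 \<in> A" and Bne: "B \<noteq> {}"
  shows "IR G = card T + 1"
proof -
  have finT: "finite T" using fin V by auto
  have "finite {D. irredundant G D}"
    by (rule finite_subset[of _ "Pow (verts G)"]) (use fin in \<open>auto simp: irredundant_def\<close>)
  moreover have "card (insert a0 T) = card T + 1"
  proof -
    have "a0 \<notin> T" using a0 dAT by blast
    thus ?thesis using finT by simp
  qed
  ultimately show ?thesis unfolding IR_def
  proof (intro Max_eqI)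
    assume f: "finite {D. irredundant G D}"
    show "finite (card ` {D. irredundant G D})" using f by simp
    show "\<And>y. y \<in> card ` {D. irredundant G D} \<Longrightarrow> y \<le> card T + 1"
      using ub[OF _ fin cT cS] by auto
    assume c: "card (insert a0 T) = card T + 1"
    show "card T + 1 \<in> card ` {D. irredundant G D}"
      using irr_ins[OF a0 Bne] c by (intro image_eqI[of _ _ "insert a0 T"]) auto
  qed
qed

lemma IR_sets_eq:
  assumes fin: "finite (verts G)" and cT: "card A + card B + 2 \<le> card T" and cS: "card S = card T"
    and Ane: "A \<noteq> {}" and Bne: "B \<noteq> {}"
  shows "IR_sets G = (\<lambda>a. insert a T) ` A \<union> (\<lambda>b. insert b S) ` B"
proof -
  obtain a0 where a0: "a0 \<in> A" using Ane by blast
  have IRv: "IR G = card T + 1" by (rule IR_val[OF fin cT cS a0 Bne])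
  have finT: "finite T" "finite S" using fin V by auto
  show ?thesis
  proof
    show "IR_sets G \<subseteq> (\<lambda>a. insert a T) ` A \<union> (\<lambda>b. insert b S) ` B"
      using ub[OF _ fin cT cS] IRv by (auto simp: IR_sets_def)
  next
    have "insert a T \<in> IR_sets G" if "a \<in> A" for a
    proof -
      have "a \<notin> T" using that dAT by blast
      thus ?thesis using irr_ins[OF that Bne] IRv finT by (simp add: IR_sets_def)
    qed
    moreover have "insert b S \<in> IR_sets G" if "b \<in> B" for b
    proof -
      have "b \<notin> S" using that dBS by blast
      thus ?thesis using gadget.irr_ins[OF swapped that Ane] IRv finT cS by (simp add: IR_sets_def)
    qed
    ultimately show "(\<lambda>a. insert a T) ` A \<union> (\<lambda>b. insert b S) ` B \<subseteq> IR_sets G" by blast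
  qed
qed

lemma swapAA:
  assumes x: "x \<in> A" and y: "y \<in> A"
  shows "swp G (insert x T) (insert y T) \<longleftrightarrow> adj G x y"
proof
  assume "adj G x y"
  moreover have "insert y T = (insert x T - {x}) \<union> {y}" using x dAT by auto
  ultimately show "swp G (insert x T) (insert y T)" unfolding swp_def by blast
next
  assume "swp G (insert x T) (insert y T)"
  then obtain u v where u: "u \<in> insert x T" and v: "v \<in> insert y T" and uv: "adj G u v"
    and eq: "insert y T = (insert x T - {u}) \<union> {v}" unfolding swp_def by blast
  have nuv: "u \<noteq> v" using uv adj_irrefl[OF g] by metis
  have "u \<notin> T"
  proof
    assume "u \<in> T"
    hence "u \<in> insert y T" by blast
    thus False using eq nuv by blast
  qed
  hence ux: "u = x" using u by blast
  have "v \<notin> T"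
  proof
    assume vT: "v \<in> T"
    have "y \<in> (insert x T - {u}) \<union> {v}" using eq by blast
    thus False using ux vT y x dAT by auto
  qed
  hence "v = y" using v by blast
  thus "adj G x y" using uv ux by simp
qed

lemma swapAB:
  assumes x: "x \<in> A" and y: "y \<in> B" and T2: "2 \<le> card T"
  shows "\<not> swp G (insert x T) (insert y S)"
proof
  assume "swp G (insert x T) (insert y S)"
  then obtain u v where eq: "insert y S = (insert x T - {u}) \<union> {v}" unfolding swp_def by blast
  have "\<exists>t\<in>T. t \<noteq> u"
  proof (rule ccontr)
    assume "\<not> ?thesis"
    hence "T \<subseteq> {u}" by blast
    hence "card T \<le> card {u}" by (intro card_mono) auto
    thus False using T2 by simp
  qed
  then obtain t where t: "t \<in> T" "t \<noteq> u" by blast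
  hence "t \<in> insert y S" using eq by blast
  thus False using t dBT dTS y by auto
qed

end

lemma (in gadget) swp_Dx:
  assumes x: "x \<in> A \<union> B" and y: "y \<in> A \<union> B" and T2: "2 \<le> card T" and S2: "2 \<le> card S"
  shows "swp G (if x \<in> A then insert x T else insert x S) (if y \<in> A then insert y T else insert y S)
     \<longleftrightarrow> ((x \<in> A \<longleftrightarrow> y \<in> A) \<and> adj G x y)"
proof -
  have sw: "gadget G B A S T" by (rule swapped)
  show ?thesis
  proof (cases "x \<in> A")
    case xA: True
    show ?thesis
    proof (cases "y \<in> A")
      case True thus ?thesis using xA swapAA by simp
    next
      case False
      hence "y \<in> B" using y by blast
      thus ?thesis using xA False swapAB[OF xA _ T2] by simp
    qed
  next
    case xA: False
    hence xB: "x \<in> B" using x by blast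
    show ?thesis
    proof (cases "y \<in> A")
      case True thus ?thesis using xA xB gadget.swapAB[OF sw xB True S2] by simp
    next
      case False
      hence "y \<in> B" using y by blast
      thus ?thesis using xA xB False gadget.swapAA[OF sw xB] by simp
    qed
  qed
qed

lemma adj_pairs: "adj (V, {{a, b} | a b. R a b}) x y \<longleftrightarrow> R x y \<or> R y x"
  by (auto simp: adj_def edges_def doubleton_eq_iff)

lemma reach_step:
  assumes "reachable H u x" "x \<in> verts H" "y \<in> verts H" "adj H x y"
  shows "reachable H u y"
  using assms unfolding reachable_def by (simp add: rtranclp.rtrancl_into_rtrancl)

theorem theorem3p1:
  fixes H :: "'b graph"
  assumes "is_graph H" and "disconnected_graph H"
  shows "\<exists>\<G> :: nat graph set. infinite \<G> \<and>
           (\<forall>G\<in>\<G>. is_graph G \<and> graph_iso (IR_graph G) H) \<and>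
           (\<forall>G1\<in>\<G>. \<forall>G2\<in>\<G>. G1 \<noteq> G2 \<longrightarrow> \<not> graph_iso G1 G2)"
proof -
  note gH = assms(1)
  define n where "n = card (verts H)"
  have finH: "finite (verts H)" using gH by (simp add: is_graph_def)
  obtain g where gbij0: "bij_betw g {0..<n} (verts H)"
    using ex_bij_betw_nat_finite[OF finH] n_def by blast
  have gbij: "bij_betw g {..<n} (verts H)" using gbij0 by (simp add: atLeast0LessThan)
  have gin: "g x \<in> verts H" if "x < n" for x using gbij that by (auto simp: bij_betw_def)
  have ginj: "g x = g y \<Longrightarrow> x < n \<Longrightarrow> y < n \<Longrightarrow> x = y" for x y
    using gbij by (auto simp: bij_betw_def inj_on_def)
  obtain u0 v0 where u0: "u0 \<in> verts H" and v0: "v0 \<in> verts H" and nr: "\<not> reachable H u0 v0"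
    using assms(2) unfolding disconnected_graph_def connected_graph_def by blast
  define A where "A = {i. i < n \<and> reachable H u0 (g i)}"
  define B where "B = {i. i < n \<and> \<not> reachable H u0 (g i)}"
  have Ane: "A \<noteq> {}"
  proof -
    obtain i where "i < n" "g i = u0" using u0 gbij by (metis bij_betw_iff_bijections lessThan_iff)
    moreover have "reachable H u0 u0" by (simp add: reachable_def)
    ultimately show ?thesis by (auto simp: A_def)
  qed
  have Bne: "B \<noteq> {}"
  proof -
    obtain i where "i < n" "g i = v0" using v0 gbij by (metis bij_betw_iff_bijections lessThan_iff)
    thus ?thesis using nr by (auto simp: B_def)
  qed
  have AB_un: "A \<union> B = {..<n}" by (auto simp: A_def B_def)
  have noAB: "\<not> adj H (g x) (g y)" if "x \<in> A" "y \<in> B" for x y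
    using that reach_step[of H u0 "g x" "g y"] gin by (auto simp: A_def B_def)
  define T :: "nat \<Rightarrow> nat set" where "T p = {n..<n+p}" for p
  define S :: "nat \<Rightarrow> nat set" where "S p = {n+p..<n+2*p}" for p
  define R where "R p x y \<longleftrightarrow> (x < n \<and> y < n \<and> adj H (g x) (g y)) \<or> (x \<in> A \<and> y \<in> B) \<or>
      (x \<in> A \<and> y \<in> T p) \<or> (x \<in> B \<and> y \<in> S p) \<or> (x \<in> T p \<and> y \<in> T p \<and> x \<noteq> y) \<or>
      (x \<in> S p \<and> y \<in> S p \<and> x \<noteq> y) \<or> (x \<in> T p \<and> y = x + p)" for p x y
  define Gr :: "nat \<Rightarrow> nat graph" where "Gr p = ({..<n+2*p}, {{a, b} | a b. R p a b})" for p
  have memT: "x \<in> T p \<longleftrightarrow> n \<le> x \<and> x < n + p" for x p by (simp add: T_def)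
  have memS: "x \<in> S p \<longleftrightarrow> n + p \<le> x \<and> x < n + 2 * p" for x p by (simp add: S_def)
  have An: "x \<in> A \<Longrightarrow> x < n" for x by (simp add: A_def)
  have Bn: "x \<in> B \<Longrightarrow> x < n" for x by (simp add: B_def)
  have AnB: "x \<in> A \<Longrightarrow> x \<notin> B" for x by (simp add: A_def B_def)
  have notA: "n \<le> x \<Longrightarrow> x \<notin> A" for x using An by force
  have notB: "n \<le> x \<Longrightarrow> x \<notin> B" for x using Bn by force
  have adjGr: "adj (Gr p) x y \<longleftrightarrow> R p x y \<or> R p y x" for p x y
    unfolding Gr_def by (rule adj_pairs)
  have vGr: "verts (Gr p) = {..<n+2*p}" for p by (simp add: Gr_def verts_def)
  have Hirr: "\<not> adj H z z" for z using adj_irrefl[OF gH] .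
  have isg: "is_graph (Gr p)" for p
    unfolding is_graph_def
  proof (intro conjI ballI)
    show "finite (verts (Gr p))" by (simp add: vGr)
    fix e assume "e \<in> edges (Gr p)"
    then obtain a b where e: "e = {a, b}" and r: "R p a b" by (auto simp: Gr_def edges_def)
    have "a \<noteq> b" using r Hirr by (auto simp: R_def memT memS notA notB dest: An Bn AnB)
    moreover have "a < n + 2 * p \<and> b < n + 2 * p" using r by (auto simp: R_def memT memS notA notB dest: An Bn AnB)
    ultimately show "\<exists>u v. e = {u, v} \<and> u \<noteq> v \<and> u \<in> verts (Gr p) \<and> v \<in> verts (Gr p)"
      using e by (auto simp: vGr)
  qed
  have gad: "gadget (Gr p) A B (T p) (S p)" if p1: "1 \<le> p" for p
  proof
    show "is_graph (Gr p)" by (rule isg)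
    have "{..<n+2*p} = {..<n} \<union> T p \<union> S p" by (auto simp: memT memS)
    then show "verts (Gr p) = A \<union> B \<union> T p \<union> S p" using AB_un vGr by simp
    show "A \<inter> B = {}" "A \<inter> T p = {}" "A \<inter> S p = {}" "B \<inter> T p = {}" "B \<inter> S p = {}" "T p \<inter> S p = {}"
      by (auto simp: memT memS notA notB dest: An Bn AnB)
    show "\<And>a b. a \<in> A \<Longrightarrow> b \<in> B \<Longrightarrow> adj (Gr p) a b" by (auto simp: adjGr R_def)
    show "\<And>a t. a \<in> A \<Longrightarrow> t \<in> T p \<Longrightarrow> adj (Gr p) a t" by (auto simp: adjGr R_def)
    show "\<And>a s. a \<in> A \<Longrightarrow> s \<in> S p \<Longrightarrow> \<not> adj (Gr p) a s"
      by (auto simp: adjGr R_def memT memS notA notB dest: An Bn AnB)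
    show "\<And>a s. a \<in> B \<Longrightarrow> s \<in> S p \<Longrightarrow> adj (Gr p) a s" by (auto simp: adjGr R_def)
    show "\<And>a s. a \<in> B \<Longrightarrow> s \<in> T p \<Longrightarrow> \<not> adj (Gr p) a s"
      by (auto simp: adjGr R_def memT memS notA notB dest: An Bn AnB)
    show "\<And>t t'. t \<in> T p \<Longrightarrow> t' \<in> T p \<Longrightarrow> t \<noteq> t' \<Longrightarrow> adj (Gr p) t t'" by (auto simp: adjGr R_def)
    show "\<And>t t'. t \<in> S p \<Longrightarrow> t' \<in> S p \<Longrightarrow> t \<noteq> t' \<Longrightarrow> adj (Gr p) t t'" by (auto simp: adjGr R_def)
    show "\<And>t. t \<in> T p \<Longrightarrow> \<exists>s\<in>S p. adj (Gr p) t s \<and> (\<forall>t'\<in>T p. t' \<noteq> t \<longrightarrow> \<not> adj (Gr p) t' s)"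
    proof -
      fix t assume t: "t \<in> T p"
      have tn: "n \<le> t" "t < n + p" using t memT by auto
      have sS: "t + p \<in> S p" "t + p \<notin> T p" "t + p \<notin> A" "t + p \<notin> B" "\<not> t + p < n"
        using tn notA notB by (auto simp: memT memS)
      have "R p t (t + p)" unfolding R_def using t by blast
      hence a1: "adj (Gr p) t (t + p)" using adjGr by blast
      have a2: "\<not> adj (Gr p) t' (t + p)" if t': "t' \<in> T p" "t' \<noteq> t" for t'
      proof -
        have f: "t' \<notin> A" "t' \<notin> B" "t' \<notin> S p" "\<not> t' < n" "t + p \<noteq> t' + p"
          using t' notA notB memT memS by auto
        have "\<not> R p t' (t + p)" "\<not> R p (t + p) t'" unfolding R_def using f sS by blast+
        thus ?thesis using adjGr by blast
      qed
      show "\<exists>s\<in>S p. adj (Gr p) t s \<and> (\<forall>t'\<in>T p. t' \<noteq> t \<longrightarrow> \<not> adj (Gr p) t' s)"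
        using sS(1) a1 a2 by blast
    qed
    show "\<And>s. s \<in> S p \<Longrightarrow> \<exists>t\<in>T p. adj (Gr p) s t \<and> (\<forall>s'\<in>S p. s' \<noteq> s \<longrightarrow> \<not> adj (Gr p) s' t)"
    proof -
      fix s assume s: "s \<in> S p"
      have sn: "n + p \<le> s" "s < n + 2 * p" using s memS by auto
      have tT: "s - p \<in> T p" "s - p \<notin> S p" "s - p \<notin> A" "s - p \<notin> B" "\<not> s - p < n" "s = (s - p) + p"
        using sn notA notB p1 by (auto simp: memT memS)
      have "R p (s - p) s" unfolding R_def using tT by blast
      hence a1: "adj (Gr p) s (s - p)" using adjGr by blast
      have a2: "\<not> adj (Gr p) s' (s - p)" if s': "s' \<in> S p" "s' \<noteq> s" for s'
      proof -
        have f: "s' \<notin> A" "s' \<notin> B" "s' \<notin> T p" "\<not> s' < n" "s' \<noteq> (s - p) + p"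
          using s' notA notB memT memS tT(6) by auto
        have "\<not> R p s' (s - p)" "\<not> R p (s - p) s'" unfolding R_def using f tT by blast+
        thus ?thesis using adjGr by blast
      qed
      show "\<exists>t\<in>T p. adj (Gr p) s t \<and> (\<forall>s'\<in>S p. s' \<noteq> s \<longrightarrow> \<not> adj (Gr p) s' t)"
        using tT(1) a1 a2 by blast
    qed
  qed
  have cardTS: "card (T p) = p" "card (S p) = p" for p by (auto simp: T_def S_def)
  have cA: "card A \<le> n" "card B \<le> n"
    using card_mono[of "{..<n}" A] card_mono[of "{..<n}" B] An Bn by auto
  have ffin: "finite A" "finite B" using An Bn by (meson finite_lessThan finite_subset subsetI lessThan_iff)+
  have AnB2: "x \<in> A \<Longrightarrow> x \<in> B \<Longrightarrow> False" for x using AnB by blast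
  have adjxy: "adj (Gr p) x y \<longleftrightarrow> adj H (g x) (g y)"
    if "x < n" "y < n" "x \<in> A \<longleftrightarrow> y \<in> A" for p x y
  proof -
    have xy: "x \<notin> T p" "x \<notin> S p" "y \<notin> T p" "y \<notin> S p" using that memT memS by auto
    have "\<not> (x \<in> A \<and> y \<in> B)" "\<not> (y \<in> A \<and> x \<in> B)" using that AnB by blast+
    hence "R p x y \<longleftrightarrow> adj H (g x) (g y)" "R p y x \<longleftrightarrow> adj H (g y) (g x)"
      unfolding R_def using xy that by blast+
    thus ?thesis using adjGr adj_sym by metis
  qed
  have good: "is_graph (Gr p) \<and> graph_iso (IR_graph (Gr p)) H" if p0: "2 * n + 2 \<le> p" for p
  proof -
    have p1: "1 \<le> p" using p0 by simp
    interpret gadget "Gr p" A B "T p" "S p" by (rule gad[OF p1])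
    define Dx where "Dx x = (if x \<in> A then insert x (T p) else insert x (S p))" for x
    have IRs: "IR_sets (Gr p) = (\<lambda>a. insert a (T p)) ` A \<union> (\<lambda>b. insert b (S p)) ` B"
      by (rule IR_sets_eq) (use vGr cardTS cA p0 Ane Bne in auto)
    have IRs2: "IR_sets (Gr p) = Dx ` {..<n}"
    proof -
      have "(\<lambda>a. insert a (T p)) ` A = Dx ` A" by (auto simp: Dx_def)
      moreover have "(\<lambda>b. insert b (S p)) ` B = Dx ` B" using AnB by (force simp: Dx_def)
      ultimately show ?thesis using IRs AB_un by (metis image_Un)
    qed
    have MinD: "Min (Dx x) = x" if "x < n" for x
    proof (rule Min_eqI)
      show "finite (Dx x)" by (simp add: Dx_def T_def S_def)
      show "x \<in> Dx x" by (simp add: Dx_def)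
      show "\<And>y. y \<in> Dx x \<Longrightarrow> x \<le> y" using that by (auto simp: Dx_def memT memS split: if_splits)
    qed
    define f where "f D = g (Min D)" for D
    have fD: "f (Dx x) = g x" if "x < n" for x using MinD[OF that] f_def by simp
    have bij: "bij_betw f (IR_sets (Gr p)) (verts H)"
      unfolding IRs2 bij_betw_def
    proof
      show "inj_on f (Dx ` {..<n})"
        by (auto simp: inj_on_def fD dest: ginj)
      have "f ` Dx ` {..<n} = g ` {..<n}" by (force simp: fD image_iff)
      thus "f ` Dx ` {..<n} = verts H" using gbij by (simp add: bij_betw_def)
    qed
    have T2: "2 \<le> card (T p)" "2 \<le> card (S p)" using cardTS p0 by auto
    have adjs: "adj (IR_graph (Gr p)) D1 D2 \<longleftrightarrow> adj H (f D1) (f D2)"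
      if D12: "D1 \<in> IR_sets (Gr p)" "D2 \<in> IR_sets (Gr p)" for D1 D2
    proof -
      obtain x y where xy: "x < n" "y < n" "D1 = Dx x" "D2 = Dx y" using D12 IRs2 by auto
      have xy': "x \<in> A \<union> B" "y \<in> A \<union> B" using xy AB_un by auto
      have "adj (IR_graph (Gr p)) D1 D2 \<longleftrightarrow> swp (Gr p) D1 D2 \<or> swp (Gr p) D2 D1"
        using IR_graph_adj D12 by blast
      also have "\<dots> \<longleftrightarrow> ((x \<in> A \<longleftrightarrow> y \<in> A) \<and> adj (Gr p) x y)"
      proof -
        have e1: "swp (Gr p) (Dx x) (Dx y) \<longleftrightarrow> ((x \<in> A \<longleftrightarrow> y \<in> A) \<and> adj (Gr p) x y)"
          using swp_Dx[OF xy'(1) xy'(2) T2] unfolding Dx_def .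
        have e2: "swp (Gr p) (Dx y) (Dx x) \<longleftrightarrow> ((y \<in> A \<longleftrightarrow> x \<in> A) \<and> adj (Gr p) y x)"
          using swp_Dx[OF xy'(2) xy'(1) T2] unfolding Dx_def .
        show ?thesis using e1 e2 xy(3,4) adj_sym[of "Gr p" y x] by auto
      qed
      also have "\<dots> \<longleftrightarrow> adj H (g x) (g y)"
      proof (cases "x \<in> A \<longleftrightarrow> y \<in> A")
        case True thus ?thesis using adjxy[OF xy(1,2) True] by simp
      next
        case False
        hence "(x \<in> A \<and> y \<in> B) \<or> (y \<in> A \<and> x \<in> B)" using xy' by blast
        hence "\<not> adj H (g x) (g y)" using noAB[of x y] noAB[of y x] adj_sym[of H "g x" "g y"] by blast
        thus ?thesis using False by simp
      qed
      finally show ?thesis using fD xy by simp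
    qed
    show ?thesis unfolding graph_iso_def IR_graph_verts using isg bij adjs by blast
  qed
  define GG where "GG = Gr ` {p. 2 * n + 2 \<le> p}"
  have cv: "card (verts (Gr p)) = n + 2 * p" for p by (simp add: vGr)
  have injGr: "inj_on Gr {p. 2 * n + 2 \<le> p}"
  proof (rule inj_onI)
    fix a b assume "Gr a = Gr b"
    hence "card (verts (Gr a)) = card (verts (Gr b))" by simp
    thus "a = b" using cv by simp
  qed
  have infp: "infinite {p::nat. 2 * n + 2 \<le> p}"
  proof -
    have "{p::nat. 2 * n + 2 \<le> p} = {2 * n + 2..}" by auto
    thus ?thesis using infinite_Ici by metis
  qed
  have "infinite GG" unfolding GG_def using finite_imageD[OF _ injGr] infp by blast
  moreover have "\<forall>G\<in>GG. is_graph G \<and> graph_iso (IR_graph G) H" using good by (auto simp: GG_def)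
  moreover have "\<forall>G1\<in>GG. \<forall>G2\<in>GG. G1 \<noteq> G2 \<longrightarrow> \<not> graph_iso G1 G2"
  proof (intro ballI impI notI)
    fix G1 G2 assume "G1 \<in> GG" "G2 \<in> GG" "G1 \<noteq> G2" "graph_iso G1 G2"
    then obtain p1 p2 where "G1 = Gr p1" "G2 = Gr p2" "p1 \<noteq> p2" "graph_iso (Gr p1) (Gr p2)"
      by (auto simp: GG_def)
    moreover have "card (verts (Gr p1)) = card (verts (Gr p2))" if "graph_iso (Gr p1) (Gr p2)"
      using that bij_betw_same_card unfolding graph_iso_def by blast
    ultimately show False using cv by simp
  qed
  ultimately show ?thesis by blast
qed

end
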